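(* Let $\mathcal{A}\in\mathbb{C}^{I_{1\ldots N}\times I_{1\ldots N}}$, and let $\mathcal{M},\mathcal{N}\in\mathbb{C}^{I_{1\ldots N}\times I_{1\ldots N}}$ be Hermitian positive definite tensors. Then (i) $0\in\sigma(\mathcal{A})$ if and only if $0\in\sigma(\mathcal{A}^{\dagger}_{\mathcal{M},\mathcal{N}})$; (ii) $0\in W(\mathcal{A})$ if and only if $0\in W(\mathcal{A}^{\dagger}_{\mathcal{M},\mathcal{N}})$.
   Context: Write $I_{1\ldots N}$ for $I_1\times\cdots\times I_N$. Einstein product: $(\mathcal{A}*_N\mathcal{B})_{i_1\ldots i_Nj_1\ldots j_L}=\sum_{k_1,\ldots,k_N}a_{i_1\ldots i_Nk_1\ldots k_N}b_{k_1\ldots k_Nj_1\ldots j_L}$ (also when $\mathcal{B}\in\mathbb{C}^{I_{1\ldots N}}$). $\mathcal{A}^H$ is the conjugate transpose. For $\mathcal{X},\mathcal{Y}\in\mathbb{C}^{I_{1\ldots N}}$, $\langle\mathcal{X},\mathcal{Y}\rangle=\mathcal{Y}^H*_N\mathcal{X}$, $\|\mathcal{X}\|=\langle\mathcal{X},\mathcal{X}\rangle^{1/2}$. $\mathcal{M}$ is Hermitian positive definite if $\mathcal{M}^H=\mathcal{M}$ and $\langle\mathcal{M}*_N\mathcal{X},\mathcal{X}\rangle>0$ for nonzero $\mathcal{X}$. $\sigma(\mathcal{A})$ is the set of $\lambda\in\mathbb{C}$ with $\mathcal{A}*_N\mathcal{X}=\lambda\mathcal{X}$ for some nonzero $\mathcal{X}\in\mathbb{C}^{I_{1\ldots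 N}}$. Numerical range: $W(\mathcal{A})=\{\langle\mathcal{A}*_N\mathcal{X},\mathcal{X}\rangle:\mathcal{X}\in\mathbb{C}^{I_{1\ldots N}},\ \|\mathcal{X}\|=1\}$. Weighted Moore-Penrose inverse $\mathcal{A}^{\dagger}_{\mathcal{M},\mathcal{N}}$: the unique $\mathcal{X}$ with $\mathcal{A}*_N\mathcal{X}*_N\mathcal{A}=\mathcal{A}$, $\mathcal{X}*_N\mathcal{A}*_N\mathcal{X}=\mathcal{X}$, $(\mathcal{M}*_N\mathcal{A}*_N\mathcal{X})^H=\mathcal{M}*_N\mathcal{A}*_N\mathcal{X}$, $(\mathcal{N}*_N\mathcal{X}*_N\mathcal{A})^H=\mathcal{N}*_N\mathcal{X}*_N\mathcal{A}$. *)

theory Defs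
  imports Complex_Main "HOL-Library.Complex_Order"
begin

definition idx :: "nat list \<Rightarrow> nat list set" where
  "idx dims = {is. length is = length dims \<and> (\<forall>k<length dims. is ! k < dims ! k)}"

type_synonym tensor = "nat list \<Rightarrow> nat list \<Rightarrow> complex"
type_synonym tvec = "nat list \<Rightarrow> complex"

text \<open>A tensor in C^{I_1..N x I_1..N}: entries indexed by two multi-indices, zero outside the index set.\<close>
definition is_tensor :: "nat list \<Rightarrow> tensor \<Rightarrow> bool" where
  "is_tensor dims A \<longleftrightarrow> (\<forall>i j. i \<notin> idx dims \<or> j \<notin> idx dims \<longrightarrow> A i j = 0)"

definition is_tvec :: "nat list \<Rightarrow> tvec \<Rightarrow> bool" where
  "is_tvec dims X \<longleftrightarrow> (\<forall>i. i \<notin> idx dims \<longrightarrow> X i = 0)"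

definition ein :: "nat list \<Rightarrow> tensor \<Rightarrow> tensor \<Rightarrow> tensor" where
  "ein dims A B = (\<lambda>i j. \<Sum>k\<in>idx dims. A i k * B k j)"

definition einv :: "nat list \<Rightarrow> tensor \<Rightarrow> tvec \<Rightarrow> tvec" where
  "einv dims A X = (\<lambda>i. \<Sum>k\<in>idx dims. A i k * X k)"

definition ctrans :: "tensor \<Rightarrow> tensor" where
  "ctrans A = (\<lambda>i j. cnj (A j i))"

definition tinner :: "nat list \<Rightarrow> tvec \<Rightarrow> tvec \<Rightarrow> complex" where
  "tinner dims X Y = (\<Sum>i\<in>idx dims. cnj (Y i) * X i)"

definition tnorm :: "nat list \<Rightarrow> tvec \<Rightarrow> real" where
  "tnorm dims X = sqrt (Re (tinner dims X X))"

definition hpd :: "nat list \<Rightarrow> tensor \<Rightarrow> bool" where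
  "hpd dims M \<longleftrightarrow> is_tensor dims M \<and> ctrans M = M \<and>
     (\<forall>X. is_tvec dims X \<and> X \<noteq> (\<lambda>_. 0) \<longrightarrow> tinner dims (einv dims M X) X > 0)"

definition tspectrum :: "nat list \<Rightarrow> tensor \<Rightarrow> complex set" where
  "tspectrum dims A = {c. \<exists>X. is_tvec dims X \<and> X \<noteq> (\<lambda>_. 0) \<and> einv dims A X = (\<lambda>i. c * X i)}"

definition numrange :: "nat list \<Rightarrow> tensor \<Rightarrow> complex set" where
  "numrange dims A = {tinner dims (einv dims A X) X | X. is_tvec dims X \<and> tnorm dims X = 1}"

definition wmp :: "nat list \<Rightarrow> tensor \<Rightarrow> tensor \<Rightarrow> tensor \<Rightarrow> tensor" where
  "wmp dims A M N = (THE X. is_tensor dims X \<and>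
      ein dims (ein dims A X) A = A \<and>
      ein dims (ein dims X A) X = X \<and>
      ctrans (ein dims M (ein dims A X)) = ein dims M (ein dims A X) \<and>
      ctrans (ein dims N (ein dims X A)) = ein dims N (ein dims X A))"

end

theory Submission
  imports Defs "HOL-Library.Function_Algebras"
begin



lemma finite_idx: "finite (idx dims)"
proof -
  have "idx dims \<subseteq> {xs. set xs \<subseteq> {..<Max (set dims)} \<and> length xs = length dims}"
  proof
    fix xs assume "xs \<in> idx dims"
    hence l: "length xs = length dims" and lt: "\<forall>k<length dims. xs ! k < dims ! k" by (auto simp: idx_def)
    have "set xs \<subseteq> {..<Max (set dims)}"
    proof
      fix x assume "x \<in> set xs"
      then obtain k where k: "k < length xs" "xs ! k = x" by (auto simp: in_set_conv_nth)
      have "dims ! k \<in> set dims" using k l by auto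
      hence "dims ! k \<le> Max (set dims)" by simp
      have "xs ! k < dims ! k" using lt k l by auto
      thus "x \<in> {..<Max (set dims)}" using \<open>dims ! k \<le> Max (set dims)\<close> k by auto
    qed
    thus "xs \<in> {xs. set xs \<subseteq> {..<Max (set dims)} \<and> length xs = length dims}" using l by auto
  qed
  thus ?thesis by (rule finite_subset) (rule finite_lists_length_eq, simp)
qed

lemma sum_fun_app: "(sum f A) x = sum (\<lambda>a. f a x) A"
  by (induction A rule: infinite_finite_induct) auto

definition Idt :: "nat list \<Rightarrow> tensor" where
  "Idt d = (\<lambda>i j. if i \<in> idx d \<and> j = i then 1 else 0)"

lemma ein_assoc: "ein d (ein d A B) C = ein d A (ein d B C)"
  unfolding ein_def
  by (auto simp: fun_eq_iff sum_distrib_left sum_distrib_right mult.assoc intro: sum.swap)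

lemma is_tensor_ein: "is_tensor d A \<Longrightarrow> is_tensor d B \<Longrightarrow> is_tensor d (ein d A B)"
  by (auto simp: is_tensor_def ein_def)

lemma is_tensor_Idt[simp]: "is_tensor d (Idt d)"
  by (auto simp: is_tensor_def Idt_def)

lemma ein_Id_left: "is_tensor d A \<Longrightarrow> ein d (Idt d) A = A"
proof -
  assume a: "is_tensor d A"
  have "(\<Sum>k\<in>idx d. (if i \<in> idx d \<and> k = i then 1 else 0) * A k j) = A i j" for i j
  proof (cases "i \<in> idx d")
    case True
    have "(\<Sum>k\<in>idx d. (if i \<in> idx d \<and> k = i then 1 else 0) * A k j) = (\<Sum>k\<in>idx d. if k = i then A k j else 0)"
      using True by (intro sum.cong) auto
    also have "\<dots> = A i j" using True finite_idx by (simp add: sum.delta')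
    finally show ?thesis .
  next
    case False thus ?thesis using a by (auto simp: is_tensor_def)
  qed
  thus ?thesis by (auto simp: ein_def Idt_def fun_eq_iff)
qed

lemma ein_Id_right: "is_tensor d A \<Longrightarrow> ein d A (Idt d) = A"
proof -
  assume a: "is_tensor d A"
  have "(\<Sum>k\<in>idx d. A i k * (if k \<in> idx d \<and> j = k then 1 else 0)) = A i j" for i j
  proof (cases "j \<in> idx d")
    case True
    have "(\<Sum>k\<in>idx d. A i k * (if k \<in> idx d \<and> j = k then 1 else 0)) = (\<Sum>k\<in>idx d. if j = k then A i k else 0)"
      by (intro sum.cong) auto
    also have "\<dots> = A i j" using True finite_idx by (simp add: sum.delta)
    finally show ?thesis .
  next
    case False
    have "(\<Sum>k\<in>idx d. A i k * (if k \<in> idx d \<and> j = k then 1 else 0)) = 0"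
      using False by (intro sum.neutral) auto
    thus ?thesis using a False by (auto simp: is_tensor_def)
  qed
  thus ?thesis by (auto simp: ein_def Idt_def fun_eq_iff)
qed

lemma ctrans_ein: "ctrans (ein d A B) = ein d (ctrans B) (ctrans A)"
  by (auto simp: ctrans_def ein_def fun_eq_iff mult.commute)

lemma ctrans_ctrans[simp]: "ctrans (ctrans A) = A"
  by (simp add: ctrans_def)

lemma ctrans_Idt[simp]: "ctrans (Idt d) = Idt d"
  by (auto simp: ctrans_def Idt_def fun_eq_iff)

lemma is_tensor_ctrans: "is_tensor d A \<Longrightarrow> is_tensor d (ctrans A)"
  by (auto simp: is_tensor_def ctrans_def)

lemma ctrans_diff: "ctrans (A - B) = ctrans A - ctrans B"
  by (auto simp: ctrans_def fun_eq_iff)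

lemma ctrans_zero[simp]: "ctrans 0 = 0"
  by (auto simp: ctrans_def fun_eq_iff)

lemma ein_diff_left: "ein d (A - B) C = ein d A C - ein d B C"
  by (auto simp: ein_def fun_eq_iff algebra_simps sum_subtractf)

lemma ein_diff_right: "ein d A (B - C) = ein d A B - ein d A C"
  by (auto simp: ein_def fun_eq_iff algebra_simps sum_subtractf)

lemma ein_add_left: "ein d (A + B) C = ein d A C + ein d B C"
  by (auto simp: ein_def fun_eq_iff algebra_simps sum.distrib)

lemma ein_add_right: "ein d A (B + C) = ein d A B + ein d A C"
  by (auto simp: ein_def fun_eq_iff algebra_simps sum.distrib)

lemma ein_zero_left[simp]: "ein d 0 C = 0"
  by (auto simp: ein_def fun_eq_iff)

lemma ein_zero_right[simp]: "ein d C 0 = 0"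
  by (auto simp: ein_def fun_eq_iff)

definition tsc :: "complex \<Rightarrow> tensor \<Rightarrow> tensor" where
  "tsc c A = (\<lambda>i j. c * A i j)"

lemma ein_tsc_left: "ein d (tsc c A) B = tsc c (ein d A B)"
  by (auto simp: ein_def tsc_def fun_eq_iff sum_distrib_left mult.assoc)

lemma ein_tsc_right: "ein d A (tsc c B) = tsc c (ein d A B)"
  by (auto simp: ein_def tsc_def fun_eq_iff sum_distrib_left algebra_simps)

lemma is_tensor_tsc: "is_tensor d A \<Longrightarrow> is_tensor d (tsc c A)"
  by (auto simp: is_tensor_def tsc_def)

lemma is_tensor_diff: "is_tensor d A \<Longrightarrow> is_tensor d B \<Longrightarrow> is_tensor d (A - B)"
  by (auto simp: is_tensor_def)

lemma is_tensor_add: "is_tensor d A \<Longrightarrow> is_tensor d B \<Longrightarrow> is_tensor d (A + B)"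
  by (auto simp: is_tensor_def)

lemma is_tensor_sum: "(\<And>l. l \<in> L \<Longrightarrow> is_tensor d (f l)) \<Longrightarrow> is_tensor d (sum f L)"
  by (auto simp: is_tensor_def sum_fun_app)

lemma ein_sum_right: "ein d A (sum f L) = (\<Sum>l\<in>L. ein d A (f l))"
proof (induction L rule: infinite_finite_induct)
  case (infinite L) thus ?case by (metis sum.infinite ein_zero_right)
next
  case empty thus ?case by (metis sum.empty ein_zero_right)
next
  case (insert x F) thus ?case by (metis sum.insert ein_add_right)
qed

lemma ein_sum_left: "ein d (sum f L) A = (\<Sum>l\<in>L. ein d (f l) A)"
proof (induction L rule: infinite_finite_induct)
  case (infinite L) thus ?case by (metis sum.infinite ein_zero_left)
next
  case empty thus ?case by (metis sum.empty ein_zero_left)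
next
  case (insert x F) thus ?case by (metis sum.insert ein_add_left)
qed

lemma einv_ein: "einv d (ein d A B) X = einv d A (einv d B X)"
  unfolding einv_def ein_def
  by (auto simp: fun_eq_iff sum_distrib_left sum_distrib_right mult.assoc intro: sum.swap)

lemma einv_Id: "is_tvec d X \<Longrightarrow> einv d (Idt d) X = X"
proof -
  assume a: "is_tvec d X"
  have "(\<Sum>k\<in>idx d. (if i \<in> idx d \<and> k = i then 1 else 0) * X k) = X i" for i
  proof (cases "i \<in> idx d")
    case True
    have "(\<Sum>k\<in>idx d. (if i \<in> idx d \<and> k = i then 1 else 0) * X k) = (\<Sum>k\<in>idx d. if k = i then X k else 0)"
      using True by (intro sum.cong) auto
    also have "\<dots> = X i" using True finite_idx by (simp add: sum.delta')
    finally show ?thesis .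
  next
    case False thus ?thesis using a by (auto simp: is_tvec_def)
  qed
  thus ?thesis by (auto simp: einv_def Idt_def fun_eq_iff)
qed

lemma is_tvec_einv: "is_tensor d A \<Longrightarrow> is_tvec d (einv d A X)"
  by (auto simp: is_tensor_def is_tvec_def einv_def)

lemma einv_zero[simp]: "einv d A (\<lambda>_. 0) = (\<lambda>_. 0)"
  by (auto simp: einv_def)

lemma tinner_einv: "tinner d (einv d A X) Y = tinner d X (einv d (ctrans A) Y)"
  unfolding tinner_def einv_def ctrans_def
  by (auto simp: sum_distrib_left sum_distrib_right algebra_simps intro: sum.swap)

definition col :: "tensor \<Rightarrow> nat list \<Rightarrow> tvec" where
  "col Y j = (\<lambda>i. Y i j)"

lemma col_ein: "col (ein d A B) j = einv d A (col B j)"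
  by (auto simp: col_def ein_def einv_def)

lemma is_tvec_col: "is_tensor d Y \<Longrightarrow> is_tvec d (col Y j)"
  by (auto simp: is_tensor_def is_tvec_def col_def)

lemma tensor_eq_col: "(\<And>j. col A j = col B j) \<Longrightarrow> A = B"
  by (auto simp: col_def fun_eq_iff)




definition tpow :: "nat list \<Rightarrow> tensor \<Rightarrow> nat \<Rightarrow> tensor" where
  "tpow d T l = ((ein d T) ^^ l) (Idt d)"

lemma tpow_0[simp]: "tpow d T 0 = Idt d" by (simp add: tpow_def)
lemma tpow_Suc: "tpow d T (Suc l) = ein d T (tpow d T l)" by (simp add: tpow_def)

lemma is_tensor_tpow: "is_tensor d T \<Longrightarrow> is_tensor d (tpow d T l)"
  by (induction l) (auto simp: tpow_Suc is_tensor_ein)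

lemma tpow_add: "is_tensor d T \<Longrightarrow> ein d (tpow d T a) (tpow d T b) = tpow d T (a + b)"
  by (induction a) (auto simp: tpow_Suc ein_assoc ein_Id_left is_tensor_tpow)

lemma tpow_1: "is_tensor d T \<Longrightarrow> tpow d T 1 = T"
  by (simp add: tpow_Suc ein_Id_right)

lemma tpow_comm: "is_tensor d T \<Longrightarrow> ein d (tpow d T l) T = ein d T (tpow d T l)"
proof -
  assume T: "is_tensor d T"
  have "ein d (tpow d T l) (tpow d T 1) = ein d (tpow d T 1) (tpow d T l)"
    using tpow_add[OF T, of l 1] tpow_add[OF T, of 1 l] by simp
  thus ?thesis using tpow_1[OF T] by simp
qed

interpretation tv: vector_space tsc
  by unfold_locales (auto simp: tsc_def fun_eq_iff algebra_simps)

definition unitt :: "nat list \<Rightarrow> nat list \<Rightarrow> tensor" where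
  "unitt a b = (\<lambda>i j. if i = a \<and> j = b then 1 else 0)"

lemma tensor_in_span:
  assumes "is_tensor d T"
  shows "T \<in> tv.span ((\<lambda>(a,b). unitt a b) ` (idx d \<times> idx d))"
proof -
  have eq: "T = (\<Sum>p\<in>idx d \<times> idx d. tsc (T (fst p) (snd p)) (unitt (fst p) (snd p)))"
  proof (rule ext, rule ext)
    fix i j
    have "(\<Sum>p\<in>idx d \<times> idx d. tsc (T (fst p) (snd p)) (unitt (fst p) (snd p))) i j
        = (\<Sum>p\<in>idx d \<times> idx d. if p = (i,j) then T i j else 0)"
      unfolding sum_fun_app by (intro sum.cong) (auto simp: tsc_def unitt_def)
    also have "\<dots> = T i j"
      using assms finite_idx by (auto simp: is_tensor_def)
    finally show "T i j = (\<Sum>p\<in>idx d \<times> idx d. tsc (T (fst p) (snd p)) (unitt (fst p) (snd p))) i j" by simp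
  qed
  show ?thesis
    by (subst eq, intro tv.span_sum tv.span_scale tv.span_base) auto
qed

lemma poly_dep:
  assumes T: "is_tensor d T"
  shows "\<exists>m c. (\<exists>l\<le>m. c l \<noteq> 0) \<and> (\<Sum>l\<le>m. tsc (c l) (tpow d T l)) = 0"
proof -
  define Bs where "Bs = (\<lambda>(a,b). unitt a b) ` (idx d \<times> idx d)"
  have fB: "finite Bs" using finite_idx by (simp add: Bs_def)
  define m where "m = card Bs"
  show ?thesis
  proof (cases "inj_on (tpow d T) {..m}")
    case True
    define P where "P = tpow d T ` {..m}"
    have cP: "card P = Suc m" using True by (simp add: P_def card_image)
    have sp: "P \<subseteq> tv.span Bs" using tensor_in_span is_tensor_tpow[OF T] by (auto simp: P_def Bs_def)
    have "\<not> tv.independent P"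
    proof
      assume "tv.independent P"
      from tv.independent_span_bound[OF fB this sp] cP show False by (simp add: m_def)
    qed
    then obtain t u where t: "finite t" "t \<subseteq> P" "(\<Sum>v\<in>t. tsc (u v) v) = 0" and v: "\<exists>v\<in>t. u v \<noteq> 0"
      unfolding tv.dependent_explicit by blast
    define c where "c l = (if tpow d T l \<in> t then u (tpow d T l) else 0)" for l
    define L where "L = {l\<in>{..m}. tpow d T l \<in> t}"
    have "(\<Sum>l\<le>m. tsc (c l) (tpow d T l)) = (\<Sum>l\<in>L. tsc (c l) (tpow d T l))"
      by (rule sum.mono_neutral_right) (auto simp: L_def c_def tsc_def fun_eq_iff)
    also have "\<dots> = (\<Sum>l\<in>L. tsc (u (tpow d T l)) (tpow d T l))"
      by (rule sum.cong) (auto simp: L_def c_def)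
    also have "\<dots> = (\<Sum>v\<in>tpow d T ` L. tsc (u v) v)"
    proof -
      have "inj_on (tpow d T) L" by (rule inj_on_subset[OF True]) (auto simp: L_def)
      thus ?thesis by (simp add: sum.reindex)
    qed
    also have "tpow d T ` L = t" using t(2) by (auto simp: L_def P_def)
    finally have s: "(\<Sum>l\<le>m. tsc (c l) (tpow d T l)) = 0" using t(3) by (simp only:)
    from v obtain w where w: "w \<in> t" "u w \<noteq> 0" by blast
    then obtain l where l: "l \<le> m" "w = tpow d T l" using t(2) by (auto simp: P_def)
    have "c l \<noteq> 0" using w l by (simp add: c_def)
    thus ?thesis using s l by blast
  next
    case False
    then obtain i j where ij: "i \<le> m" "j \<le> m" "i \<noteq> j" "tpow d T i = tpow d T j"
      unfolding inj_on_def by auto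
    define c where "c l = (if l = i then 1 else if l = j then -1 else (0::complex))" for l
    have "(\<Sum>l\<le>m. tsc (c l) (tpow d T l)) = (\<Sum>l\<in>{i,j}. tsc (c l) (tpow d T l))"
      by (rule sum.mono_neutral_right) (auto simp: ij c_def tsc_def fun_eq_iff)
    also have "\<dots> = 0" using ij by (auto simp: c_def tsc_def fun_eq_iff)
    finally show ?thesis using ij by (intro exI[of _ m] exI[of _ c]) (auto simp: c_def)
  qed
qed




lemma poly_fact:
  assumes T: "is_tensor d T"
  shows "\<exists>k c R. c \<noteq> 0 \<and> is_tensor d R \<and> ein d T R = ein d R T \<and>
           ein d (tpow d T k) (tsc c (Idt d) + ein d T R) = 0"
proof -
  obtain m c where c: "\<exists>l\<le>m. c l \<noteq> 0" "(\<Sum>l\<le>m. tsc (c l) (tpow d T l)) = 0"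
    using poly_dep[OF T] by blast
  define k where "k = (LEAST l. c l \<noteq> 0)"
  obtain l0 where l0: "l0 \<le> m" "c l0 \<noteq> 0" using c(1) by blast
  have ck: "c k \<noteq> 0" unfolding k_def by (rule LeastI[of "\<lambda>l. c l \<noteq> 0" l0, OF l0(2)])
  have "k \<le> l0" unfolding k_def by (rule Least_le[of "\<lambda>l. c l \<noteq> 0" l0, OF l0(2)])
  hence km: "k \<le> m" using l0(1) by simp
  have below: "l < k \<Longrightarrow> c l = 0" for l unfolding k_def using not_less_Least by blast
  define R where "R = (\<Sum>l<m-k. tsc (c (Suc (l+k))) (tpow d T l))"
  have Rt: "is_tensor d R" unfolding R_def
    by (intro is_tensor_sum is_tensor_tsc is_tensor_tpow T)
  have comm: "ein d T R = ein d R T"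
    unfolding R_def ein_sum_right ein_sum_left ein_tsc_left ein_tsc_right
    by (simp only: tpow_comm[OF T])
  define f where "f l = tsc (c l) (tpow d T l)" for l
  have "(\<Sum>l\<le>m. f l) = (\<Sum>l\<in>{k..m}. f l)"
    by (rule sum.mono_neutral_right) (auto simp: f_def below tsc_def fun_eq_iff)
  also have "\<dots> = (\<Sum>l\<in>(\<lambda>l. l + k) ` {..m-k}. f l)"
  proof -
    have "(\<lambda>l. l + k) ` {..m-k} = {k..m}"
    proof
      show "{k..m} \<subseteq> (\<lambda>l. l + k) ` {..m-k}"
      proof
        fix x assume "x \<in> {k..m}"
        hence "x = (x - k) + k" "x - k \<in> {..m-k}" by auto
        thus "x \<in> (\<lambda>l. l + k) ` {..m-k}" by blast
      qed
    qed (use km in auto)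
    thus ?thesis by simp
  qed
  also have "\<dots> = (\<Sum>l\<le>m-k. f (l + k))"
    by (simp add: sum.reindex)
  also have "\<dots> = (\<Sum>l<Suc (m-k). f (l + k))"
    by (simp add: lessThan_Suc_atMost)
  also have "\<dots> = f k + (\<Sum>l<m-k. f (Suc l + k))"
    by (subst sum.lessThan_Suc_shift) simp
  finally have sumeq: "(\<Sum>l\<le>m. f l) = f k + (\<Sum>l<m-k. f (Suc l + k))" .
  have "ein d (tpow d T k) (tsc (c k) (Idt d) + ein d T R)
      = tsc (c k) (tpow d T k) + ein d (tpow d T (Suc k)) R"
  proof -
    have "ein d (tpow d T k) (tsc (c k) (Idt d) + ein d T R)
        = tsc (c k) (ein d (tpow d T k) (Idt d)) + ein d (ein d (tpow d T k) T) R"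
      by (simp only: ein_add_right ein_tsc_right ein_assoc)
    also have "\<dots> = tsc (c k) (tpow d T k) + ein d (tpow d T (Suc k)) R"
      by (simp only: ein_Id_right[OF is_tensor_tpow[OF T]] tpow_comm[OF T] tpow_Suc)
    finally show ?thesis .
  qed
  also have "ein d (tpow d T (Suc k)) R = (\<Sum>l<m-k. f (Suc l + k))"
    unfolding R_def ein_sum_right ein_tsc_right f_def
    by (rule sum.cong) (auto simp: tpow_add T add.commute)
  also have "tsc (c k) (tpow d T k) + (\<Sum>l<m-k. f (Suc l + k)) = (\<Sum>l\<le>m. f l)"
  proof -
    have fk: "f k = tsc (c k) (tpow d T k)" by (simp add: f_def)
    show "tsc (c k) (tpow d T k) + (\<Sum>l<m-k. f (Suc l + k)) = (\<Sum>l\<le>m. f l)"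
      by (simp only: sumeq fk)
  qed
  also have "\<dots> = 0" using c(2) by (simp only: f_def)
  finally show ?thesis using ck Rt comm by blast
qed




lemma zero_tensor[simp]: "(\<lambda>a b. 0) = (0::tensor)"
  by (simp add: zero_fun_def)

definition inj_t :: "nat list \<Rightarrow> tensor \<Rightarrow> bool" where
  "inj_t d T \<longleftrightarrow> (\<forall>X. is_tvec d X \<and> einv d T X = (\<lambda>_. 0) \<longrightarrow> X = (\<lambda>_. 0))"

lemma inj_tensor:
  assumes "inj_t d T" "is_tensor d Y" "ein d T Y = 0"
  shows "Y = 0"
proof (rule ext, rule ext)
  fix i j
  have "einv d T (col Y j) = col (ein d T Y) j" by (simp add: col_ein)
  also have "\<dots> = (\<lambda>_. 0)" using assms(3) by (simp add: col_def)
  finally have "col Y j = (\<lambda>_. 0)" using assms(1) is_tvec_col[OF assms(2)] by (auto simp: inj_t_def)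
  thus "Y i j = 0 i j" by (auto simp: col_def fun_eq_iff)
qed

lemma tpow_kill:
  assumes T: "is_tensor d T" and inj: "inj_t d T"
  shows "is_tensor d Z \<Longrightarrow> ein d (tpow d T k) Z = 0 \<Longrightarrow> Z = 0"
proof (induction k)
  case 0 thus ?case by (simp add: ein_Id_left)
next
  case (Suc k)
  have "ein d T (ein d (tpow d T k) Z) = 0" using Suc.prems by (simp add: tpow_Suc ein_assoc)
  hence "ein d (tpow d T k) Z = 0"
    by (rule inj_tensor[OF inj is_tensor_ein[OF is_tensor_tpow[OF T] Suc.prems(1)]])
  thus ?case using Suc by blast
qed

lemma inv_exists:
  assumes T: "is_tensor d T" and inj: "inj_t d T"
  shows "\<exists>T'. is_tensor d T' \<and> ein d T T' = Idt d \<and> ein d T' T = Idt d"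
proof -
  obtain k c R where kcR: "c \<noteq> 0" "is_tensor d R" "ein d T R = ein d R T"
    "ein d (tpow d T k) (tsc c (Idt d) + ein d T R) = 0"
    using poly_fact[OF T] by blast
  have "tsc c (Idt d) + ein d T R = 0"
    by (rule tpow_kill[OF T inj _ kcR(4)])
       (intro is_tensor_add is_tensor_tsc is_tensor_ein T kcR(2) is_tensor_Idt)
  hence z: "c * Idt d i j + ein d T R i j = 0" for i j
    by (auto simp: tsc_def fun_eq_iff)
  define T' where "T' = tsc (-1/c) R"
  have "ein d T T' = Idt d"
    unfolding T'_def ein_tsc_right
  proof (rule ext, rule ext)
    fix i j
    have "ein d T R i j = - c * Idt d i j" using z[of i j] by (simp add: add_eq_0_iff2)
    thus "tsc (- 1 / c) (ein d T R) i j = Idt d i j" using kcR(1) by (simp add: tsc_def)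
  qed
  moreover have "ein d T' T = Idt d"
    unfolding T'_def ein_tsc_left
  proof (rule ext, rule ext)
    fix i j
    have "ein d R T i j = - c * Idt d i j" using z[of i j] kcR(3) by (simp add: add_eq_0_iff2)
    thus "tsc (- 1 / c) (ein d R T) i j = Idt d i j" using kcR(1) by (simp add: tsc_def)
  qed
  moreover have "is_tensor d T'" unfolding T'_def by (intro is_tensor_tsc kcR(2))
  ultimately show ?thesis by blast
qed

lemma idx_pow:
  assumes T: "is_tensor d T"
    and ix: "\<And>Y. is_tensor d Y \<Longrightarrow> ein d T (ein d T Y) = 0 \<Longrightarrow> ein d T Y = 0"
  shows "is_tensor d Z \<Longrightarrow> ein d (tpow d T (Suc j)) Z = 0 \<Longrightarrow> ein d T Z = 0"
proof (induction j)
  case 0 thus ?case using tpow_1[OF T] by simp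
next
  case (Suc j)
  have "ein d T (ein d T (ein d (tpow d T j) Z)) = 0"
    using Suc.prems by (simp add: tpow_Suc ein_assoc)
  hence "ein d T (ein d (tpow d T j) Z) = 0"
    by (rule ix[OF is_tensor_ein[OF is_tensor_tpow[OF T] Suc.prems(1)]])
  hence "ein d (tpow d T (Suc j)) Z = 0" by (simp add: tpow_Suc ein_assoc)
  thus ?case using Suc by blast
qed

lemma group_inv:
  assumes T: "is_tensor d T"
    and ix: "\<And>Y. is_tensor d Y \<Longrightarrow> ein d T (ein d T Y) = 0 \<Longrightarrow> ein d T Y = 0"
  shows "\<exists>G. is_tensor d G \<and> ein d T G = ein d G T \<and> ein d (ein d T T) G = T"
proof -
  obtain k c R where kcR: "c \<noteq> 0" "is_tensor d R" "ein d T R = ein d R T"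
    "ein d (tpow d T k) (tsc c (Idt d) + ein d T R) = 0"
    using poly_fact[OF T] by blast
  define Z where "Z = tsc c (Idt d) + ein d T R"
  have Zt: "is_tensor d Z" unfolding Z_def
    by (intro is_tensor_add is_tensor_tsc is_tensor_ein T kcR(2) is_tensor_Idt)
  have "ein d T Z = 0"
  proof (cases k)
    case 0 thus ?thesis using kcR(4) Zt by (simp add: Z_def ein_Id_left)
  next
    case (Suc j) thus ?thesis using idx_pow[OF T ix Zt] kcR(4) by (simp add: Z_def)
  qed
  hence "tsc c T + ein d (ein d T T) R = 0"
    unfolding Z_def by (simp only: ein_add_right ein_tsc_right ein_Id_right[OF T] ein_assoc)
  hence z: "c * T i j + ein d (ein d T T) R i j = 0" for i j
    by (auto simp: tsc_def fun_eq_iff)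
  define G where "G = tsc (-1/c) R"
  have "ein d (ein d T T) G = T"
    unfolding G_def ein_tsc_right
  proof (rule ext, rule ext)
    fix i j
    have "ein d (ein d T T) R i j = - c * T i j" using z[of i j] by (simp add: add_eq_0_iff2)
    thus "tsc (- 1 / c) (ein d (ein d T T) R) i j = T i j" using kcR(1) by (simp add: tsc_def)
  qed
  moreover have "ein d T G = ein d G T" unfolding G_def ein_tsc_left ein_tsc_right kcR(3) ..
  moreover have "is_tensor d G" unfolding G_def by (intro is_tensor_tsc kcR(2))
  ultimately show ?thesis by blast
qed




lemma tinner_zero_left[simp]: "tinner d (\<lambda>_. 0) Y = 0" by (simp add: tinner_def)
lemma tinner_zero_right[simp]: "tinner d X (\<lambda>_. 0) = 0" by (simp add: tinner_def)

lemma hpd_zero: "hpd d M \<Longrightarrow> is_tvec d z \<Longrightarrow> tinner d (einv d M z) z = 0 \<Longrightarrow> z = (\<lambda>_. 0)"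
  unfolding hpd_def by force

lemma hpd_inj: "hpd d M \<Longrightarrow> inj_t d M"
  unfolding inj_t_def using hpd_zero by fastforce

lemma hpd_herm: "hpd d M \<Longrightarrow> ctrans M = M" by (simp add: hpd_def)
lemma hpd_tensor: "hpd d M \<Longrightarrow> is_tensor d M" by (simp add: hpd_def)

lemma col_lemma:
  assumes "\<And>y. is_tvec d y \<Longrightarrow> einv d P y = (\<lambda>_. 0) \<Longrightarrow> einv d Q y = (\<lambda>_. 0)"
    and "is_tensor d Y" "ein d P Y = 0"
  shows "ein d Q Y = 0"
proof (rule tensor_eq_col)
  fix j
  have "einv d P (col Y j) = (\<lambda>_. 0)" using assms(3) col_ein[of d P Y j] by (simp add: col_def)
  hence "einv d Q (col Y j) = (\<lambda>_. 0)" using assms(1) is_tvec_col[OF assms(2)] by blast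
  moreover have "col (ein d Q Y) j = einv d Q (col Y j)" by (rule col_ein)
  moreover have "col 0 j = (\<lambda>_. 0)" by (simp add: col_def)
  ultimately show "col (ein d Q Y) j = col 0 j" by simp
qed


context
  fixes d :: "nat list" and A M N N' :: tensor
  assumes At: "is_tensor d A" and hM: "hpd d M" and hN: "hpd d N"
    and N't: "is_tensor d N'" and NN': "ein d N N' = Idt d"
begin

definition "Bt = ein d (ctrans A) (ein d M A)"
definition "Tt = ein d N' Bt"

lemma Bt_tensor: "is_tensor d Bt"
  unfolding Bt_def by (rule is_tensor_ein[OF is_tensor_ctrans[OF At] is_tensor_ein[OF hpd_tensor[OF hM] At]])

lemma Tt_tensor: "is_tensor d Tt"
  unfolding Tt_def by (intro is_tensor_ein N't Bt_tensor)

lemma Bt_herm: "ctrans Bt = Bt"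
  unfolding Bt_def by (simp add: ctrans_ein hpd_herm[OF hM] ein_assoc)

lemma NT: "ein d N Tt = Bt"
  unfolding Tt_def by (simp add: ein_assoc[symmetric] NN' ein_Id_left Bt_tensor)

lemma Bv: "einv d Bt y = einv d N (einv d Tt y)"
  by (simp add: NT flip: einv_ein)

lemma ker_vec: "is_tvec d y \<Longrightarrow> einv d Tt y = (\<lambda>_. 0) \<Longrightarrow> einv d A y = (\<lambda>_. 0)"
proof -
  assume y: "is_tvec d y" and Ty: "einv d Tt y = (\<lambda>_. 0)"
  have By: "einv d Bt y = (\<lambda>_. 0)" using Bv Ty by simp
  have "tinner d (einv d M (einv d A y)) (einv d A y) = tinner d (einv d (ctrans A) (einv d M (einv d A y))) y"
    using tinner_einv[of d "ctrans A" "einv d M (einv d A y)" y] by simp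
  also have "\<dots> = tinner d (einv d Bt y) y" by (simp add: Bt_def einv_ein)
  also have "\<dots> = 0" using By by simp
  finally show ?thesis using hpd_zero[OF hM is_tvec_einv[OF At]] by blast
qed

lemma ker_ten: "is_tensor d Y \<Longrightarrow> ein d Tt Y = 0 \<Longrightarrow> ein d A Y = 0"
  using col_lemma[of d Tt A Y] ker_vec by blast

lemma index_vec: "is_tvec d y \<Longrightarrow> einv d Tt (einv d Tt y) = (\<lambda>_. 0) \<Longrightarrow> einv d Tt y = (\<lambda>_. 0)"
proof -
  assume y: "is_tvec d y" and TTy: "einv d Tt (einv d Tt y) = (\<lambda>_. 0)"
  define z where "z = einv d Tt y"
  have zt: "is_tvec d z" unfolding z_def by (rule is_tvec_einv[OF Tt_tensor])
  have Bz: "einv d Bt z = (\<lambda>_. 0)" using Bv TTy by (simp add: z_def)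
  have "tinner d (einv d N z) z = tinner d (einv d Bt y) z" by (simp add: Bv z_def)
  also have "\<dots> = tinner d y (einv d Bt z)" by (simp add: tinner_einv Bt_herm)
  also have "\<dots> = 0" using Bz by simp
  finally show ?thesis using hpd_zero[OF hN zt] by (simp add: z_def)
qed

lemma index_ten: "is_tensor d Y \<Longrightarrow> ein d Tt (ein d Tt Y) = 0 \<Longrightarrow> ein d Tt Y = 0"
  using col_lemma[of d Tt Tt "ein d Tt Y"] index_vec is_tensor_ein[OF Tt_tensor]
  by (metis col_ein col_lemma einv_ein ein_assoc)

lemma exists_ctx:
  "\<exists>X. is_tensor d X \<and> ein d (ein d A X) A = A \<and> ein d (ein d X A) X = X \<and>
      ctrans (ein d M (ein d A X)) = ein d M (ein d A X) \<and>
      ctrans (ein d N (ein d X A)) = ein d N (ein d X A)"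
proof -
  note T = Tt_tensor
  have Mt: "is_tensor d M" and Nt: "is_tensor d N" using hM hN by (auto simp: hpd_tensor)
  have Mh: "ctrans M = M" and Nh: "ctrans N = N" using hM hN by (auto simp: hpd_herm)
  obtain G where Gt: "is_tensor d G" and TG: "ein d Tt G = ein d G Tt" and TTG: "ein d (ein d Tt Tt) G = Tt"
    using group_inv[OF Tt_tensor index_ten] by blast
  define E where "E = ein d Tt G"
  have Et: "is_tensor d E" unfolding E_def by (intro is_tensor_ein T Gt)
  define W where "W = ein d N' (ein d (ctrans A) M)"
  have Wt: "is_tensor d W" unfolding W_def
    by (intro is_tensor_ein N't is_tensor_ctrans At Mt)
  define X where "X = ein d (ein d Tt (ein d G G)) W"
  have Xt: "is_tensor d X" unfolding X_def by (intro is_tensor_ein T Gt Wt)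
  have TE: "ein d Tt E = Tt" unfolding E_def using TTG by (simp add: ein_assoc)
  have "ein d Tt (Idt d - E) = 0" by (simp add: ein_diff_right TE ein_Id_right T)
  hence "ein d A (Idt d - E) = 0" by (rule ker_ten[OF is_tensor_diff[OF is_tensor_Idt Et]])
  hence AE: "ein d A E = A" by (simp add: ein_diff_right ein_Id_right At)
  have WA: "ein d W A = Tt" unfolding W_def Tt_def Bt_def by (simp add: ein_assoc)
  have GT_T: "ein d G (ein d Tt Z) = ein d Tt (ein d G Z)" for Z
    by (simp add: TG flip: ein_assoc)
  have XA: "ein d X A = E"
  proof -
    have "ein d X A = ein d Tt (ein d G (ein d G Tt))" unfolding X_def by (simp add: ein_assoc WA)
    also have "\<dots> = ein d (ein d (ein d Tt Tt) G) G"
      by (simp add: GT_T flip: TG) (simp add: ein_assoc)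
    also have "\<dots> = E" by (simp add: TTG E_def)
    finally show ?thesis .
  qed
  have e1: "ein d (ein d A X) A = A" by (simp add: ein_assoc XA AE)
  have ETX: "ein d E Tt = Tt"
  proof -
    have "ein d E Tt = ein d Tt (ein d G Tt)" by (simp add: E_def ein_assoc)
    also have "\<dots> = ein d (ein d Tt Tt) G" by (simp add: ein_assoc TG)
    finally show ?thesis by (simp add: TTG)
  qed
  have e2: "ein d (ein d X A) X = X"
  proof -
    have "ein d E X = ein d (ein d E Tt) (ein d (ein d G G) W)" unfolding X_def by (simp add: ein_assoc)
    also have "\<dots> = X" by (simp add: ETX X_def ein_assoc)
    finally show ?thesis by (simp add: XA)
  qed
  define Ec where "Ec = ctrans E"
  have BE: "ein d Bt E = Bt" by (simp flip: NT add: ein_assoc TE)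
  have EcB: "ein d Ec Bt = Bt" using arg_cong[OF BE, of ctrans] by (simp add: ctrans_ein Bt_herm Ec_def)
  have NE1: "ein d N E = ein d Ec (ein d N E)"
  proof -
    have "ein d N E = ein d Bt G" by (simp add: E_def NT flip: ein_assoc)
    also have "\<dots> = ein d Ec (ein d Bt G)" by (simp add: EcB flip: ein_assoc)
    also have "ein d Bt G = ein d N E" by (simp add: E_def NT flip: ein_assoc)
    finally show ?thesis .
  qed
  have cNE: "ctrans (ein d N E) = ein d Ec N" by (simp add: ctrans_ein Nh Ec_def)
  have NEh: "ctrans (ein d N E) = ein d N E"
  proof -
    have "ctrans (ein d N E) = ctrans (ein d Ec (ein d N E))" using NE1 by simp
    also have "\<dots> = ein d (ein d Ec N) E" by (simp add: ctrans_ein Nh Ec_def)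
    also have "\<dots> = ein d N E" using NE1 by (simp add: ein_assoc)
    finally show ?thesis .
  qed
  have e4: "ctrans (ein d N (ein d X A)) = ein d N (ein d X A)" using NEh by (simp add: XA)
  define F where "F = ein d A X"
  define Fc where "Fc = ctrans F"
  have cAE: "ein d Ec (ctrans A) = ctrans A" using arg_cong[OF AE, of ctrans] by (simp add: ctrans_ein Ec_def)
  have K: "ein d (ctrans A) (ein d M F) = ein d (ctrans A) M"
  proof -
    have "ein d (ctrans A) (ein d M F) = ein d Bt X" by (simp add: F_def Bt_def ein_assoc)
    also have "\<dots> = ein d (ein d N E) W"
    proof -
      have "ein d Bt X = ein d N (ein d (ein d (ein d Tt Tt) G) (ein d G W))"
        by (simp add: X_def flip: NT) (simp add: ein_assoc)
      moreover have "ein d Tt (ein d Tt (ein d G Z)) = ein d Tt Z" for Z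
        using arg_cong[OF TTG, of "\<lambda>U. ein d U Z"] by (simp add: ein_assoc)
      ultimately show ?thesis by (simp add: E_def ein_assoc)
    qed
    also have "\<dots> = ein d (ein d Ec N) W" using NEh cNE by simp
    also have "\<dots> = ein d Ec (ein d (ctrans A) M)"
    proof -
      have "ein d N (ein d N' Z) = Z" if "is_tensor d Z" for Z
        using that by (simp add: NN' ein_Id_left flip: ein_assoc)
      moreover have "is_tensor d (ein d (ctrans A) M)" by (intro is_tensor_ein is_tensor_ctrans At Mt)
      ultimately show ?thesis by (simp add: W_def ein_assoc)
    qed
    also have "\<dots> = ein d (ctrans A) M" by (simp add: cAE flip: ein_assoc)
    finally show ?thesis .
  qed
  have FcMA: "ein d Fc (ein d M A) = ein d M A"
    using arg_cong[OF K, of ctrans] by (simp add: ctrans_ein Mh Fc_def ein_assoc)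
  have MF1: "ein d M F = ein d Fc (ein d M F)"
  proof -
    have "ein d Fc (ein d M F) = ein d (ein d Fc (ein d M A)) X" by (simp add: F_def ein_assoc)
    also have "\<dots> = ein d M F" by (simp add: FcMA F_def ein_assoc)
    finally show ?thesis by simp
  qed
  have e3: "ctrans (ein d M F) = ein d M F"
  proof -
    have "ctrans (ein d M F) = ctrans (ein d Fc (ein d M F))" using MF1 by simp
    also have "\<dots> = ein d (ein d Fc M) F" by (simp add: ctrans_ein Mh Fc_def)
    also have "\<dots> = ein d M F" using MF1 by (simp add: ein_assoc)
    finally show ?thesis .
  qed
  show ?thesis using Xt e1 e2 e3 e4 unfolding F_def by blast
qed

end




definition wmp_prop :: "nat list \<Rightarrow> tensor \<Rightarrow> tensor \<Rightarrow> tensor \<Rightarrow> tensor \<Rightarrow> bool" where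
  "wmp_prop d A M N X \<longleftrightarrow> is_tensor d X \<and>
      ein d (ein d A X) A = A \<and>
      ein d (ein d X A) X = X \<and>
      ctrans (ein d M (ein d A X)) = ein d M (ein d A X) \<and>
      ctrans (ein d N (ein d X A)) = ein d N (ein d X A)"

lemma wmp_unique:
  assumes At: "is_tensor d A" and hM: "hpd d M" and hN: "hpd d N"
    and X: "wmp_prop d A M N X" and Y: "wmp_prop d A M N Y"
  shows "X = Y"
proof -
  have Xt: "is_tensor d X" and Yt: "is_tensor d Y" using X Y by (auto simp: wmp_prop_def)
  have Mt: "is_tensor d M" and Nt: "is_tensor d N" using hM hN by (auto simp: hpd_tensor)
  have Mh: "ctrans M = M" and Nh: "ctrans N = N" using hM hN by (auto simp: hpd_herm)
  define P where "P = ein d A X"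
  define Q where "Q = ein d A Y"
  have QP: "ein d Q P = P" using X Y by (simp add: P_def Q_def wmp_prop_def flip: ein_assoc)
  have PQ: "ein d P Q = Q" using X Y by (simp add: P_def Q_def wmp_prop_def flip: ein_assoc)
  have MP: "ein d (ctrans P) M = ein d M P"
    using X by (simp add: P_def wmp_prop_def ctrans_ein Mh flip: ein_assoc)
  have MQ: "ein d (ctrans Q) M = ein d M Q"
    using Y by (simp add: Q_def wmp_prop_def ctrans_ein Mh flip: ein_assoc)
  have "ein d M Q = ein d M (ein d P Q)" using PQ by simp
  also have "\<dots> = ein d (ctrans P) (ein d M Q)" by (simp flip: ein_assoc add: MP)
  also have "\<dots> = ein d (ein d (ctrans P) (ctrans Q)) M" by (simp flip: MQ add: ein_assoc)
  also have "\<dots> = ein d M P" by (simp flip: ctrans_ein add: QP MP)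
  finally have "ein d M (P - Q) = 0" by (simp add: ein_diff_right)
  hence PQe: "P = Q"
    using inj_tensor[OF hpd_inj[OF hM] is_tensor_diff[OF is_tensor_ein[OF At Xt] is_tensor_ein[OF At Yt]]]
    by (simp add: P_def Q_def)
  define P' where "P' = ein d X A"
  define Q' where "Q' = ein d Y A"
  have P'Q': "ein d P' Q' = P'" using X Y by (simp add: P'_def Q'_def wmp_prop_def ein_assoc)
  have Q'P': "ein d Q' P' = Q'" using X Y by (simp add: P'_def Q'_def wmp_prop_def ein_assoc)
  have NP: "ein d (ctrans P') N = ein d N P'"
    using X by (simp add: P'_def wmp_prop_def ctrans_ein Nh flip: ein_assoc)
  have NQ: "ein d (ctrans Q') N = ein d N Q'"
    using Y by (simp add: Q'_def wmp_prop_def ctrans_ein Nh flip: ein_assoc)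
  have "ein d N P' = ein d (ctrans (ein d P' Q')) N" by (simp add: P'Q' NP)
  also have "\<dots> = ein d (ctrans Q') (ein d N P')" by (simp add: ctrans_ein ein_assoc NP)
  also have "\<dots> = ein d N Q'" by (simp flip: ein_assoc add: NQ) (simp add: ein_assoc Q'P')
  finally have "ein d N (P' - Q') = 0" by (simp add: ein_diff_right)
  hence P'Q'e: "P' = Q'"
    using inj_tensor[OF hpd_inj[OF hN] is_tensor_diff[OF is_tensor_ein[OF Xt At] is_tensor_ein[OF Yt At]]]
    by (simp add: P'_def Q'_def)
  have "X = ein d X P" using X by (simp add: P_def wmp_prop_def ein_assoc)
  also have "\<dots> = ein d P' Y" by (simp add: PQe Q_def P'_def ein_assoc)
  also have "\<dots> = Y" using Y by (simp add: P'Q'e Q'_def wmp_prop_def)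
  finally show ?thesis .
qed

lemma wmp_prop:
  assumes At: "is_tensor d A" and hM: "hpd d M" and hN: "hpd d N"
  shows "wmp_prop d A M N (wmp d A M N)"
proof -
  obtain N' where N': "is_tensor d N'" "ein d N N' = Idt d"
    using inv_exists[OF hpd_tensor[OF hN] hpd_inj[OF hN]] by blast
  have ex: "\<exists>X. wmp_prop d A M N X"
    using exists_ctx[OF At hM hN N'] unfolding wmp_prop_def .
  have "\<exists>!X. wmp_prop d A M N X" using ex wmp_unique[OF At hM hN] by blast
  hence "wmp_prop d A M N (THE X. wmp_prop d A M N X)" by (rule theI')
  thus ?thesis unfolding wmp_def wmp_prop_def[abs_def] by simp
qed




lemma spec0: "0 \<in> tspectrum d T \<longleftrightarrow> \<not> inj_t d T"
proof
  assume "0 \<in> tspectrum d T"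
  then obtain X where X: "is_tvec d X" "X \<noteq> (\<lambda>_. 0)" "einv d T X = (\<lambda>i. 0 * X i)"
    unfolding tspectrum_def by blast
  have "einv d T X = (\<lambda>_. 0)" using X(3) by simp
  thus "\<not> inj_t d T" using X(1,2) unfolding inj_t_def by blast
next
  assume "\<not> inj_t d T"
  then obtain X where X: "is_tvec d X" "X \<noteq> (\<lambda>_. 0)" "einv d T X = (\<lambda>_. 0)"
    unfolding inj_t_def by blast
  have "einv d T X = (\<lambda>i. 0 * X i)" using X(3) by simp
  thus "0 \<in> tspectrum d T" using X(1,2) unfolding tspectrum_def by blast
qed

lemma inj_of_inv: "ein d P Q = Idt d \<Longrightarrow> inj_t d Q"
  unfolding inj_t_def
proof (intro allI impI)
  fix X assume PQ: "ein d P Q = Idt d" and X: "is_tvec d X \<and> einv d Q X = (\<lambda>_. 0)"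
  have "X = einv d (Idt d) X" using X by (simp add: einv_Id)
  also have "\<dots> = einv d P (einv d Q X)" by (simp add: PQ flip: einv_ein)
  also have "\<dots> = (\<lambda>_. 0)" using X by simp
  finally show "X = (\<lambda>_. 0)" .
qed

lemma inv_of_inj:
  assumes At: "is_tensor d A" and Xt: "is_tensor d X"
    and e1: "ein d (ein d A X) A = A" and e2: "ein d (ein d X A) X = X" and inj: "inj_t d A"
  shows "ein d A X = Idt d \<and> ein d X A = Idt d"
proof -
  obtain A' where A': "is_tensor d A'" "ein d A A' = Idt d" "ein d A' A = Idt d"
    using inv_exists[OF At inj] by blast
  have "ein d X A = ein d (ein d A' A) (ein d X A)"
    by (simp add: A' ein_Id_left is_tensor_ein Xt At)
  also have "\<dots> = ein d A' (ein d (ein d A X) A)" by (simp add: ein_assoc)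
  also have "\<dots> = Idt d" by (simp add: e1 A')
  finally have 1: "ein d X A = Idt d" .
  have "ein d A X = ein d (ein d A X) (ein d A A')"
    by (simp add: A' ein_Id_right is_tensor_ein Xt At)
  also have "\<dots> = ein d (ein d (ein d A X) A) A'" by (simp add: ein_assoc)
  also have "\<dots> = Idt d" by (simp add: e1 A')
  finally show ?thesis using 1 by simp
qed

lemma tinner_scale: "tinner d (\<lambda>i. a * X i) (\<lambda>i. b * Y i) = cnj b * a * tinner d X Y"
proof -
  have "tinner d (\<lambda>i. a * X i) (\<lambda>i. b * Y i) = (\<Sum>i\<in>idx d. (cnj b * a) * (cnj (Y i) * X i))"
    unfolding tinner_def by (rule sum.cong) (simp_all add: mult_ac)
  thus ?thesis by (simp only: tinner_def sum_distrib_left)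
qed

lemma einv_scale: "einv d T (\<lambda>i. c * X i) = (\<lambda>i. c * einv d T X i)"
proof -
  have "einv d T (\<lambda>i. c * X i) i = c * einv d T X i" for i
  proof -
    have "einv d T (\<lambda>i. c * X i) i = (\<Sum>k\<in>idx d. c * (T i k * X k))"
      unfolding einv_def by (rule sum.cong) (simp_all add: mult_ac)
    thus ?thesis by (simp only: einv_def sum_distrib_left)
  qed
  thus ?thesis by (rule ext)
qed

lemma tinner_cnj: "tinner d X Y = cnj (tinner d Y X)"
proof -
  have "cnj (tinner d Y X) = (\<Sum>i\<in>idx d. cnj (cnj (X i) * Y i))" by (simp only: tinner_def cnj_sum)
  also have "\<dots> = tinner d X Y" unfolding tinner_def by (rule sum.cong) (simp_all add: mult.commute)
  finally show ?thesis by simp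
qed

lemma tinner_self_pos:
  assumes "is_tvec d y" "y \<noteq> (\<lambda>_. 0)"
  shows "Re (tinner d y y) > 0"
proof -
  obtain i where i: "y i \<noteq> 0" using assms(2) by auto
  hence iI: "i \<in> idx d" using assms(1) by (auto simp: is_tvec_def)
  have "Re (tinner d y y) = (\<Sum>k\<in>idx d. (cmod (y k))^2)"
  proof -
    have "Re (cnj (y k) * y k) = (cmod (y k))^2" for k
    proof -
      have "(cmod (y k))^2 = (Re (y k))^2 + (Im (y k))^2" by (rule cmod_power2)
      moreover have "Re (cnj (y k) * y k) = (Re (y k))^2 + (Im (y k))^2" by (simp add: power2_eq_square)
      ultimately show ?thesis by simp
    qed
    thus ?thesis by (simp add: tinner_def Re_sum)
  qed
  also have "\<dots> > 0"
    by (rule sum_pos2[OF finite_idx iI]) (use i in auto)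
  finally show ?thesis .
qed

lemma normalize:
  assumes "is_tvec d y" "y \<noteq> (\<lambda>_. 0)"
  shows "\<exists>c. tnorm d (\<lambda>i. c * y i) = 1 \<and> is_tvec d (\<lambda>i. c * y i)"
proof -
  define r where "r = Re (tinner d y y)"
  have r: "r > 0" using tinner_self_pos[OF assms] by (simp add: r_def)
  define c where "c = complex_of_real (1 / sqrt r)"
  have cc: "cnj c * c = complex_of_real (1 / r)"
  proof -
    have "cnj c * c = complex_of_real ((1 / sqrt r) * (1 / sqrt r))" by (simp only: c_def complex_cnj_complex_of_real of_real_mult)
    also have "(1 / sqrt r) * (1 / sqrt r) = 1 / r"
    proof -
      have s: "sqrt r * sqrt r = r" using r by simp
      have "(1 / sqrt r) * (1 / sqrt r) = (1 * 1) / (sqrt r * sqrt r)" by (rule times_divide_times_eq)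
      thus ?thesis using s by simp
    qed
    finally show ?thesis .
  qed
  have "Re (tinner d (\<lambda>i. c * y i) (\<lambda>i. c * y i)) = Re (complex_of_real (1 / r) * tinner d y y)"
    by (simp only: tinner_scale cc)
  also have "\<dots> = (1 / r) * r" by (simp add: r_def)
  also have "\<dots> = 1" using r by simp
  finally have "tnorm d (\<lambda>i. c * y i) = 1" by (simp add: tnorm_def)
  moreover have "is_tvec d (\<lambda>i. c * y i)" using assms(1) by (simp add: is_tvec_def)
  ultimately show ?thesis by blast
qed

lemma nr_mem:
  assumes "is_tvec d z" "tnorm d z = 1" "tinner d (einv d T z) z = 0"
  shows "0 \<in> numrange d T"
  unfolding numrange_def
  by (rule CollectI, rule exI[of _ z]) (simp add: assms)

lemma nr_noninj: "\<not> inj_t d T \<Longrightarrow> 0 \<in> numrange d T"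
proof -
  assume "\<not> inj_t d T"
  then obtain x where x: "is_tvec d x" "x \<noteq> (\<lambda>_. 0)" "einv d T x = (\<lambda>_. 0)"
    unfolding inj_t_def by blast
  obtain c where c: "tnorm d (\<lambda>i. c * x i) = 1" "is_tvec d (\<lambda>i. c * x i)"
    using normalize[OF x(1,2)] by blast
  have "tinner d (einv d T (\<lambda>i. c * x i)) (\<lambda>i. c * x i) = 0"
    by (simp add: einv_scale x(3))
  thus ?thesis using c nr_mem by blast
qed

lemma tnorm_zero: "tnorm d (\<lambda>_. 0) = 0" by (simp add: tnorm_def)

lemma nr_inv:
  assumes Pt: "is_tensor d P" and PQ: "ein d P Q = Idt d" and QP: "ein d Q P = Idt d"
    and "0 \<in> numrange d P"
  shows "0 \<in> numrange d Q"
proof -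
  obtain x where x: "is_tvec d x" "tnorm d x = 1" "tinner d (einv d P x) x = 0"
    using assms(4) unfolding numrange_def by auto
  have xn: "x \<noteq> (\<lambda>_. 0)" using x(2) tnorm_zero by auto
  define y where "y = einv d P x"
  have yt: "is_tvec d y" unfolding y_def by (rule is_tvec_einv[OF Pt])
  have Qy: "einv d Q y = x" unfolding y_def by (simp flip: einv_ein add: QP einv_Id x(1))
  have yn: "y \<noteq> (\<lambda>_. 0)" using Qy xn by auto
  have "tinner d (einv d Q y) y = tinner d x y" by (simp only: Qy)
  also have "\<dots> = cnj (tinner d y x)" by (rule tinner_cnj)
  also have "\<dots> = 0" using x(3) by (simp add: y_def)
  finally have "tinner d (einv d Q y) y = 0" .
  obtain c where c: "tnorm d (\<lambda>i. c * y i) = 1" "is_tvec d (\<lambda>i. c * y i)"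
    using normalize[OF yt yn] by blast
  have "tinner d (einv d Q (\<lambda>i. c * y i)) (\<lambda>i. c * y i) = 0"
    by (simp add: einv_scale tinner_scale \<open>tinner d (einv d Q y) y = 0\<close>)
  thus ?thesis using c nr_mem by blast
qed

theorem theorem6p1:
  fixes dims :: "nat list" and A M N :: tensor
  assumes "is_tensor dims A" and "hpd dims M" and "hpd dims N"
  shows "(0 \<in> tspectrum dims A \<longleftrightarrow> 0 \<in> tspectrum dims (wmp dims A M N)) \<and>
         (0 \<in> numrange dims A \<longleftrightarrow> 0 \<in> numrange dims (wmp dims A M N))"
proof -
  define X where "X = wmp dims A M N"
  have W: "wmp_prop dims A M N X" unfolding X_def by (rule wmp_prop[OF assms])
  have Xt: "is_tensor dims X" and e1: "ein dims (ein dims A X) A = A" and e2: "ein dims (ein dims X A) X = X"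
    using W by (auto simp: wmp_prop_def)
  have injeq: "inj_t dims A \<longleftrightarrow> inj_t dims X"
  proof
    assume "inj_t dims A"
    hence "ein dims A X = Idt dims" using inv_of_inj[OF assms(1) Xt e1 e2] by blast
    thus "inj_t dims X" by (rule inj_of_inv)
  next
    assume "inj_t dims X"
    hence "ein dims X A = Idt dims" using inv_of_inj[OF Xt assms(1) e2 e1] by blast
    thus "inj_t dims A" by (rule inj_of_inv)
  qed
  have nr: "0 \<in> numrange dims A \<longleftrightarrow> 0 \<in> numrange dims X"
  proof (cases "inj_t dims A")
    case True
    hence i: "ein dims A X = Idt dims \<and> ein dims X A = Idt dims"
      using inv_of_inj[OF assms(1) Xt e1 e2] by blast
    show ?thesis
    proof
      assume "0 \<in> numrange dims A"
      thus "0 \<in> numrange dims X" using nr_inv[OF assms(1)] i by blast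
    next
      assume "0 \<in> numrange dims X"
      thus "0 \<in> numrange dims A" using nr_inv[OF Xt] i by blast
    qed
  next
    case False
    hence "\<not> inj_t dims X" using injeq by simp
    thus ?thesis using nr_noninj[OF False] nr_noninj by simp
  qed
  have s: "0 \<in> tspectrum dims A \<longleftrightarrow> 0 \<in> tspectrum dims X" by (simp only: spec0 injeq)
  show ?thesis using s nr unfolding X_def by (rule conjI)
qed


end
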